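(* Let $(G,k)$ be an instance of PITVD, let $S\subseteq V(G)$ be such that $G-S$ is a simple (prop-int, tree)-graph, and let $V_2$ be the set of vertices of the connected components of $G-S$ that are trees. If there is a vertex $v\in S$ such that $G[\{v\}\cup V_2]$ contains a $v$-flower of order $4k+3$, then every solution of size at most $k$ for $(G,k)$ contains $v$, and $(G,k)$ is a yes-instance if and only if $(G-v,k-1)$ is a yes-instance.
   Context: PITVD: the input is an undirected multigraph $G$ (no self-loops) and an integer $k$; the question is whether there exists $X\subseteq V(G)$ with $|X|\le k$ (a solution) such that $G-X$ is a simple graph and every connected component of $G-X$ is a proper interval graph or a tree. A simple graph is a (prop-int, tree)-graph if each of its connected components is a proper interval graph or a tree. A cycle is a sequence $(v_1,\dots,v_\ell,v_1)$ with $\ell\ge2$, distinct $v_i$, consecutive vertices adjacent (for $\ell=2$ this means a double edge). A $v$-flower of order $\ell$ is a family of $\ell$ cycles each containing $v$ such that any two of them intersect only in $v$. *)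

theory Defs
  imports Main "HOL-Library.Disjoint_Sets" Complex_Main
begin

record 'a mgraph =
  verts :: "'a set"
  mult  :: "'a \<Rightarrow> 'a \<Rightarrow> nat"

definition multigraph :: "'a mgraph \<Rightarrow> bool" where
  "multigraph G \<longleftrightarrow> finite (verts G)
     \<and> (\<forall>u w. mult G u w = mult G w u)
     \<and> (\<forall>u. mult G u u = 0)
     \<and> (\<forall>u w. mult G u w > 0 \<longrightarrow> u \<in> verts G \<and> w \<in> verts G)"

definition adj :: "'a mgraph \<Rightarrow> 'a \<Rightarrow> 'a \<Rightarrow> bool" where
  "adj G u w \<longleftrightarrow> u \<in> verts G \<and> w \<in> verts G \<and> mult G u w > 0"

definition induced :: "'a mgraph \<Rightarrow> 'a set \<Rightarrow> 'a mgraph" where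
  "induced G A = \<lparr>verts = verts G \<inter> A,
     mult = (\<lambda>u w. if u \<in> A \<and> w \<in> A then mult G u w else 0)\<rparr>"

definition del_verts :: "'a mgraph \<Rightarrow> 'a set \<Rightarrow> 'a mgraph" where
  "del_verts G X = induced G (verts G - X)"

definition simple :: "'a mgraph \<Rightarrow> bool" where
  "simple G \<longleftrightarrow> (\<forall>u \<in> verts G. \<forall>w \<in> verts G. mult G u w \<le> 1)"

definition connected :: "'a mgraph \<Rightarrow> bool" where
  "connected G \<longleftrightarrow> verts G \<noteq> {} \<and>
     (\<forall>u \<in> verts G. \<forall>w \<in> verts G. (u, w) \<in> {(x, y). adj G x y}\<^sup>*)"

definition component :: "'a mgraph \<Rightarrow> 'a set \<Rightarrow> bool" where
  "component G C \<longleftrightarrow> C \<subseteq> verts G \<and> connected (induced G C)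
     \<and> (\<forall>u \<in> C. \<forall>w. adj G u w \<longrightarrow> w \<in> C)"

definition is_cycle :: "'a mgraph \<Rightarrow> 'a list \<Rightarrow> bool" where
  "is_cycle G cs \<longleftrightarrow> length cs \<ge> 2 \<and> distinct cs \<and> set cs \<subseteq> verts G \<and>
     (if length cs = 2 then mult G (cs ! 0) (cs ! 1) \<ge> 2
      else (\<forall>i < length cs. adj G (cs ! i) (cs ! ((i + 1) mod length cs))))"

definition is_tree :: "'a mgraph \<Rightarrow> bool" where
  "is_tree G \<longleftrightarrow> simple G \<and> connected G \<and> \<not> (\<exists>cs. is_cycle G cs)"

definition proper_interval :: "'a mgraph \<Rightarrow> bool" where
  "proper_interval G \<longleftrightarrow> simple G \<and>
     (\<exists>l r :: 'a \<Rightarrow> real.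
        (\<forall>u \<in> verts G. l u \<le> r u) \<and>
        (\<forall>u \<in> verts G. \<forall>w \<in> verts G. u \<noteq> w \<longrightarrow>
            (adj G u w \<longleftrightarrow> {l u..r u} \<inter> {l w..r w} \<noteq> {})) \<and>
        (\<forall>u \<in> verts G. \<forall>w \<in> verts G. \<not> ({l u..r u} \<subset> {l w..r w})))"

definition propint_tree :: "'a mgraph \<Rightarrow> bool" where
  "propint_tree G \<longleftrightarrow> simple G \<and>
     (\<forall>C. component G C \<longrightarrow> proper_interval (induced G C) \<or> is_tree (induced G C))"

definition solution :: "'a mgraph \<Rightarrow> int \<Rightarrow> 'a set \<Rightarrow> bool" where
  "solution G k X \<longleftrightarrow> X \<subseteq> verts G \<and> int (card X) \<le> k \<and> propint_tree (del_verts G X)"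

definition yes_instance :: "'a mgraph \<Rightarrow> int \<Rightarrow> bool" where
  "yes_instance G k \<longleftrightarrow> (\<exists>X. solution G k X)"

definition flower :: "'a mgraph \<Rightarrow> 'a \<Rightarrow> 'a list list \<Rightarrow> bool" where
  "flower G v F \<longleftrightarrow> (\<forall>c \<in> set F. is_cycle G c \<and> v \<in> set c) \<and>
     (\<forall>i < length F. \<forall>j < length F. i \<noteq> j \<longrightarrow> set (F ! i) \<inter> set (F ! j) = {v})"

end

theory Submission
  imports Defs
begin

lemma verts_induced[simp]: "verts (induced G A) = verts G \<inter> A" by (simp add: induced_def)
lemma mult_induced: "mult (induced G A) u w = (if u \<in> A \<and> w \<in> A then mult G u w else 0)"
  by (simp add: induced_def)
lemma adj_induced: "adj (induced G A) u w \<longleftrightarrow> adj G u w \<and> u \<in> A \<and> w \<in> A"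
  by (auto simp: adj_def induced_def)
lemma sym_induced: "\<forall>u w. mult G u w = mult G w u \<Longrightarrow> \<forall>u w. mult (induced G A) u w = mult (induced G A) w u"
  by (auto simp: mult_induced)
lemma adj_sym: "\<forall>u w. mult G u w = mult G w u \<Longrightarrow> adj G u w \<Longrightarrow> adj G w u"
  by (auto simp: adj_def)

lemma component_of:
  assumes sym: "\<forall>u w. mult H u w = mult H w u" and v: "v \<in> verts H"
  defines "C \<equiv> {w. (v,w) \<in> {(x,y). adj H x y}\<^sup>*}"
  shows "component H C" "v \<in> C" "\<And>u w. u \<in> C \<Longrightarrow> adj H u w \<Longrightarrow> w \<in> C"
proof -
  let ?R = "{(x,y). adj H x y}"
  let ?R' = "{(x,y). adj (induced H C) x y}"
  show vC: "v \<in> C" unfolding C_def by simp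
  show cl: "\<And>u w. u \<in> C \<Longrightarrow> adj H u w \<Longrightarrow> w \<in> C" unfolding C_def
    by (auto intro: rtrancl_into_rtrancl)
  have sub: "C \<subseteq> verts H"
  proof
    fix w assume "w \<in> C"
    hence "(v,w) \<in> ?R\<^sup>*" by (simp add: C_def)
    thus "w \<in> verts H" by (induct rule: rtrancl_induct) (auto simp: v adj_def)
  qed
  have reach: "(v,w) \<in> ?R'\<^sup>*" if "w \<in> C" for w
  proof -
    from that have "(v,w) \<in> ?R\<^sup>*" by (simp add: C_def)
    thus ?thesis
    proof (induct rule: rtrancl_induct)
      case base then show ?case by simp
    next
      case (step y z)
      have "y \<in> C" "z \<in> C" using step(1,2) unfolding C_def by (auto intro: rtrancl_into_rtrancl)
      hence "(y,z) \<in> ?R'" using step(2) by (simp add: adj_induced)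
      thus ?case using step(3) by (metis rtrancl_into_rtrancl)
    qed
  qed
  have symR': "?R'\<inverse> = ?R'" using adj_sym[OF sym_induced[OF sym]] by auto
  have "connected (induced H C)"
    unfolding connected_def
  proof (intro conjI ballI)
    show "verts (induced H C) \<noteq> {}" using vC v by auto
    fix u w assume "u \<in> verts (induced H C)" "w \<in> verts (induced H C)"
    hence "(v,u) \<in> ?R'\<^sup>*" "(v,w) \<in> ?R'\<^sup>*" by (auto intro: reach)
    moreover have "(u,v) \<in> ?R'\<^sup>*" using rtrancl_converseI[OF \<open>(v,u) \<in> ?R'\<^sup>*\<close>] symR' by simp
    ultimately show "(u, w) \<in> ?R'\<^sup>*" by (meson rtrancl_trans)
  qed
  thus "component H C" using sub cl unfolding component_def by auto
qed

lemma no_triangle: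
  assumes mg: "multigraph G"
    and V2: "V2 = \<Union>{C. component (del_verts G S) C \<and> is_tree (induced (del_verts G S) C)}"
    and abc: "a \<in> V2" "b \<in> V2" "c \<in> V2" "distinct [a,b,c]" "adj G a b" "adj G b c" "adj G a c"
  shows False
proof -
  let ?D = "del_verts G S"
  from abc(1) V2 obtain C where C: "component ?D C" "is_tree (induced ?D C)" "a \<in> C" by auto
  have inD: "x \<in> verts ?D" if "x \<in> V2" for x using that V2 by (auto simp: component_def)
  have adjD: "adj ?D x y" if "x\<in>V2" "y\<in>V2" "adj G x y" for x y
    using inD[OF that(1)] inD[OF that(2)] that(3) by (auto simp: del_verts_def adj_induced)
  have "b \<in> C" using C(1,3) adjD[OF abc(1,2,5)] by (auto simp: component_def)
  have "c \<in> C" using C(1,3) adjD[OF abc(1,3,7)] by (auto simp: component_def)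
  have sym: "\<forall>u w. mult G u w = mult G w u" using mg by (simp add: multigraph_def)
  have ca: "adj G c a" using adj_sym[OF sym abc(7)] .
  have e: "adj (induced ?D C) x y" if "x \<in> {a,b,c}" "y \<in> {a,b,c}" "adj G x y" for x y
    using that adjD abc(1-3) C(3) \<open>b\<in>C\<close> \<open>c\<in>C\<close> by (auto simp: adj_induced)
  have "is_cycle (induced ?D C) [a,b,c]"
    unfolding is_cycle_def
  proof (intro conjI)
    show "set [a,b,c] \<subseteq> verts (induced ?D C)"
      using inD abc(1-3) C(3) \<open>b\<in>C\<close> \<open>c\<in>C\<close> by auto
    have "\<forall>i<3. adj (induced ?D C) ([a,b,c] ! i) ([a,b,c] ! ((i + 1) mod 3))"
    proof (intro allI impI)
      fix i :: nat assume "i < 3"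
      hence "i = 0 \<or> i = 1 \<or> i = 2" by auto
      thus "adj (induced ?D C) ([a,b,c] ! i) ([a,b,c] ! ((i + 1) mod 3))"
        using e abc(5,6) ca by auto
    qed
    thus "if length [a,b,c] = 2 then 2 \<le> mult (induced ?D C) ([a,b,c] ! 0) ([a,b,c] ! 1)
      else \<forall>i<length [a,b,c]. adj (induced ?D C) ([a,b,c] ! i) ([a,b,c] ! ((i + 1) mod length [a,b,c]))"
      by simp
  qed (use abc(4) in auto)
  thus False using C(2) unfolding is_tree_def by blast
qed

lemma cycle_nbrs:
  assumes sym: "\<forall>u w. mult K u w = mult K w u" and cyc: "is_cycle K c" and len: "length c \<ge> 3"
    and v: "v \<in> set c"
  shows "\<exists>a b. a \<noteq> b \<and> a \<noteq> v \<and> b \<noteq> v \<and> a \<in> set c \<and> b \<in> set c \<and> adj K v a \<and> adj K v b"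
proof -
  let ?n = "length c"
  obtain i where i: "i < ?n" "c!i = v" using v by (auto simp: in_set_conv_nth)
  have adjc: "\<forall>j<?n. adj K (c!j) (c!((j+1) mod ?n))" using cyc len by (auto simp: is_cycle_def)
  have dc: "distinct c" using cyc by (simp add: is_cycle_def)
  define p where "p = (if i = 0 then ?n - 1 else i - 1)"
  define s where "s = (i+1) mod ?n"
  have p: "p < ?n" "(p+1) mod ?n = i" using i len by (auto simp: p_def)
  have s: "s < ?n" "s \<noteq> i" "s \<noteq> p" "p \<noteq> i"
  proof -
    show "s < ?n" using len unfolding s_def by (intro mod_less_divisor) auto
    have "i + 1 < ?n \<or> i + 1 = ?n" using i by auto
    thus "s \<noteq> i" "s \<noteq> p" "p \<noteq> i" using len i by (auto simp: s_def p_def)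
  qed
  have "adj K v (c!s)" using adjc i unfolding s_def by metis
  moreover have "adj K (c!p) v" using adjc p i by metis
  hence "adj K v (c!p)" using adj_sym[OF sym] by blast
  moreover have "c!s \<noteq> c!p" "c!s \<noteq> v" "c!p \<noteq> v" using s p i dc by (auto simp: nth_eq_iff_index_eq)
  ultimately show ?thesis using s p by (metis nth_mem)
qed

lemma interval_nbrs:
  fixes l r :: "'a \<Rightarrow> real"
  assumes lr: "\<forall>u\<in>verts H. l u \<le> r u"
    and ad: "\<forall>u\<in>verts H. \<forall>w\<in>verts H. u \<noteq> w \<longrightarrow> (adj H u w \<longleftrightarrow> {l u..r u} \<inter> {l w..r w} \<noteq> {})"
    and pc: "\<forall>u\<in>verts H. \<forall>w\<in>verts H. \<not> {l u..r u} \<subset> {l w..r w}"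
    and a: "adj H v u" "adj H v w" "u \<noteq> w" "u \<noteq> v" "w \<noteq> v" "(l u \<le> l v) = (l w \<le> l v)"
  shows "adj H u w"
proof -
  have vs: "u \<in> verts H" "w \<in> verts H" "v \<in> verts H" using a by (auto simp: adj_def)
  have key: "(l x \<le> l v \<longrightarrow> l x \<le> l v \<and> l v \<le> r x) \<and> (\<not> l x \<le> l v \<longrightarrow> l x \<le> r v \<and> r v \<le> r x)"
    if "x \<in> verts H" "adj H v x" "x \<noteq> v" for x
  proof -
    have "{l v..r v} \<inter> {l x..r x} \<noteq> {}" using ad that vs by auto
    then obtain t where "t \<in> {l v..r v} \<inter> {l x..r x}" by blast
    hence t: "l v \<le> t" "t \<le> r v" "l x \<le> t" "t \<le> r x" by auto
    have "\<not> {l x..r x} \<subset> {l v..r v}" using pc that vs by auto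
    moreover have "l v < l x \<Longrightarrow> r x < r v \<Longrightarrow> {l x..r x} \<subset> {l v..r v}"
      using t by auto
    ultimately show ?thesis using t by force
  qed
  have ku: "(l u \<le> l v \<longrightarrow> l u \<le> l v \<and> l v \<le> r u) \<and> (\<not> l u \<le> l v \<longrightarrow> l u \<le> r v \<and> r v \<le> r u)"
    using key vs a by blast
  have kw: "(l w \<le> l v \<longrightarrow> l w \<le> l v \<and> l v \<le> r w) \<and> (\<not> l w \<le> l v \<longrightarrow> l w \<le> r v \<and> r v \<le> r w)"
    using key vs a by blast
  have "{l u..r u} \<inter> {l w..r w} \<noteq> {}"
  proof (cases "l u \<le> l v")
    case True
    hence "l v \<in> {l u..r u} \<inter> {l w..r w}" using ku kw a(6) by auto
    thus ?thesis by blast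
  next
    case False
    hence "r v \<in> {l u..r u} \<inter> {l w..r w}" using ku kw a(6) by auto
    thus ?thesis by blast
  qed
  thus ?thesis using ad vs a(3) by blast
qed

lemma five:
  fixes P :: "'a \<Rightarrow> bool"
  assumes "distinct [x1,x2,x3,x4,x5]"
    and E: "\<And>x y. x \<in> {x1,x2,x3,x4,x5} \<Longrightarrow> y \<in> {x1,x2,x3,x4,x5} \<Longrightarrow> x \<noteq> y \<Longrightarrow> P x = P y \<Longrightarrow> E x y"
    and T: "\<And>x y z. x \<in> {x1,x2,x3,x4,x5} \<Longrightarrow> y \<in> {x1,x2,x3,x4,x5} \<Longrightarrow> z \<in> {x1,x2,x3,x4,x5}
       \<Longrightarrow> distinct [x,y,z] \<Longrightarrow> E x y \<Longrightarrow> E y z \<Longrightarrow> E x z \<Longrightarrow> False"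
  shows False
proof -
  have "\<exists>x y z. x \<in> {x1,x2,x3,x4,x5} \<and> y \<in> {x1,x2,x3,x4,x5} \<and> z \<in> {x1,x2,x3,x4,x5}
       \<and> distinct [x,y,z] \<and> P x = P y \<and> P y = P z"
    using assms(1) by (cases "P x1"; cases "P x2"; cases "P x3"; cases "P x4"; cases "P x5"; simp; blast)
  then obtain x y z where "x \<in> {x1,x2,x3,x4,x5}" "y \<in> {x1,x2,x3,x4,x5}" "z \<in> {x1,x2,x3,x4,x5}"
     "distinct [x,y,z]" "P x = P y" "P y = P z" by blast
  thus False using E T by (metis distinct_length_2_or_more distinct_singleton)
qed


lemma must_contain:
  assumes mg: "multigraph G"
    and SV: "S \<subseteq> verts G"
    and V2: "V2 = \<Union>{C. component (del_verts G S) C \<and> is_tree (induced (del_verts G S) C)}"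
    and vS: "v \<in> S"
    and fl: "flower (induced G ({v} \<union> V2)) v F"
    and len: "int (length F) = 4 * k + 3"
    and sol: "solution G k X"
  shows "v \<in> X"
proof (rule ccontr)
  assume vX: "v \<notin> X"
  define K where "K = induced G ({v} \<union> V2)"
  define D where "D = del_verts G X"
  have finG: "finite (verts G)" and sym: "\<forall>u w. mult G u w = mult G w u"
    using mg by (auto simp: multigraph_def)
  have symK: "\<forall>u w. mult K u w = mult K w u" unfolding K_def using sym_induced[OF sym] .
  have symD: "\<forall>u w. mult D u w = mult D w u" unfolding D_def del_verts_def using sym_induced[OF sym] .
  have XV: "X \<subseteq> verts G" and kX: "int (card X) \<le> k" and ptD: "propint_tree D"
    using sol by (auto simp: solution_def D_def)
  have finX: "finite X" using XV finG finite_subset by blast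
  have vG: "v \<in> verts G" using vS SV by auto
  have vD: "v \<in> verts D" using vG vX by (simp add: D_def del_verts_def)
  have adjD: "adj D x y \<longleftrightarrow> adj G x y \<and> x \<notin> X \<and> y \<notin> X" for x y
    by (auto simp: D_def del_verts_def adj_def mult_induced)
  have adjK: "adj K x y \<Longrightarrow> adj G x y" for x y by (simp add: K_def adj_induced)
  have cycK: "is_cycle K (F!i)" "v \<in> set (F!i)" if "i < length F" for i
    using fl that unfolding flower_def K_def by auto
  have disj: "set (F!i) \<inter> set (F!j) = {v}" if "i < length F" "j < length F" "i \<noteq> j" for i j
    using fl that unfolding flower_def by auto
  define Bad where "Bad = {i. i < length F \<and> set (F!i) \<inter> X \<noteq> {}}"
  define Good where "Good = {i. i < length F \<and> set (F!i) \<inter> X = {}}"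
  have cB: "card Bad \<le> card X"
  proof -
    define f where "f i = (SOME x. x \<in> set (F!i) \<inter> X)" for i
    have fB: "f i \<in> set (F!i) \<inter> X" if "i \<in> Bad" for i
      using that unfolding Bad_def f_def by (metis (mono_tags) some_in_eq mem_Collect_eq)
    have "inj_on f Bad"
    proof (rule inj_onI)
      fix i j assume ij: "i \<in> Bad" "j \<in> Bad" "f i = f j"
      show "i = j"
      proof (rule ccontr)
        assume "i \<noteq> j"
        hence "set (F!i) \<inter> set (F!j) = {v}" using disj ij(1,2) by (auto simp: Bad_def)
        thus False using fB[OF ij(1)] fB[OF ij(2)] ij(3) vX by auto
      qed
    qed
    moreover have "f ` Bad \<subseteq> X" using fB by auto
    ultimately show ?thesis using card_inj_on_le finX by blast
  qed
  have "Bad \<union> Good = {..<length F}" "Bad \<inter> Good = {}" by (auto simp: Bad_def Good_def)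
  hence "card Bad + card Good = length F"
    by (metis card_Un_disjoint card_lessThan finite_Un finite_lessThan)
  hence "card Good \<ge> 3" using len kX cB by linarith
  then obtain B where B: "B \<subseteq> Good" "card B = 3"
    by (meson obtain_subset_with_card_n)
  then obtain i1 i2 i3 where I: "B = {i1,i2,i3}" "i1 \<noteq> i2" "i2 \<noteq> i3" "i1 \<noteq> i3"
    by (auto simp: card_3_iff)
  have G123: "i1 \<in> Good" "i2 \<in> Good" "i3 \<in> Good" using B I by auto
  have len3: "length (F!i) \<ge> 3" if "i \<in> Good" for i
  proof (rule ccontr)
    let ?c = "F!i"
    assume ln: "\<not> 3 \<le> length (F!i)"
    have il: "i < length F" and cX: "set ?c \<inter> X = {}" using that by (auto simp: Good_def)
    have c2: "length ?c = 2" "2 \<le> mult K (?c!0) (?c!1)" using cycK(1)[OF il] ln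
      by (auto simp: is_cycle_def)
    have m: "?c!0 \<in> set ?c" "?c!1 \<in> set ?c" using c2 by auto
    have sc: "set ?c \<subseteq> verts K" using cycK(1)[OF il] by (simp add: is_cycle_def)
    have "?c!0 \<in> verts D" "?c!1 \<in> verts D" "mult D (?c!0) (?c!1) \<ge> 2"
      using m sc cX c2(2) by (auto simp: K_def D_def del_verts_def mult_induced split: if_splits)
    moreover have "simple D" using ptD by (simp add: propint_tree_def)
    ultimately show False unfolding simple_def by fastforce
  qed
  define C where "C = {w. (v,w) \<in> {(x,y). adj D x y}\<^sup>*}"
  have compC: "component D C" and vC: "v \<in> C" and clC: "\<And>u w. u \<in> C \<Longrightarrow> adj D u w \<Longrightarrow> w \<in> C"
    using component_of[OF symD vD] unfolding C_def by auto
  define H where "H = induced D C"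
  have "proper_interval H \<or> is_tree H" using ptD compC by (auto simp: propint_tree_def H_def)
  moreover have "\<not> is_tree H"
  proof -
    let ?c = "F!i1"
    let ?n = "length ?c"
    have il: "i1 < length F" and cX: "set ?c \<inter> X = {}" using G123 by (auto simp: Good_def)
    have n3: "?n \<ge> 3" using len3 G123 by auto
    have cyc: "is_cycle K ?c" using cycK il by auto
    have adjc: "\<forall>j<?n. adj K (?c!j) (?c!((j+1) mod ?n))" using cyc n3 by (auto simp: is_cycle_def)
    have adjcD: "adj D (?c!j) (?c!((j+1) mod ?n))" if "j < ?n" for j
    proof -
      have "(j+1) mod ?n < ?n" using n3 by (intro mod_less_divisor) auto
      hence "?c!j \<in> set ?c" "?c!((j+1) mod ?n) \<in> set ?c" using that by auto
      thus ?thesis using adjc that adjK cX adjD by blast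
    qed
    obtain i0 where i0: "i0 < ?n" "?c!i0 = v" using cycK(2)[OF il] by (auto simp: in_set_conv_nth)
    have reach: "?c!((i0+j) mod ?n) \<in> C" for j
    proof (induct j)
      case 0 then show ?case using i0 vC by simp
    next
      case (Suc j)
      have "(i0+j) mod ?n < ?n" using n3 by (intro mod_less_divisor) auto
      hence "adj D (?c!((i0+j) mod ?n)) (?c!(((i0+j) mod ?n + 1) mod ?n))" by (rule adjcD)
      moreover have "((i0+j) mod ?n + 1) mod ?n = (i0 + Suc j) mod ?n" by (simp add: mod_Suc_eq)
      ultimately show ?case using clC Suc by metis
    qed
    have sC: "set ?c \<subseteq> C"
    proof
      fix x assume "x \<in> set ?c"
      then obtain j where j: "j < ?n" "x = ?c!j" by (auto simp: in_set_conv_nth)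
      have "(i0 + (?n - i0 + j)) mod ?n = j" using i0 j by simp
      thus "x \<in> C" using reach[of "?n - i0 + j"] j by simp
    qed
    have sD: "set ?c \<subseteq> verts D" using cyc cX
      by (auto simp: is_cycle_def K_def D_def del_verts_def)
    have "is_cycle H ?c"
      unfolding is_cycle_def
    proof (intro conjI)
      show "2 \<le> ?n" using n3 by simp
      show "distinct ?c" using cyc by (simp add: is_cycle_def)
      show "set ?c \<subseteq> verts H" using sC sD by (auto simp: H_def)
      have "\<forall>j<?n. adj H (?c!j) (?c!((j+1) mod ?n))"
      proof (intro allI impI)
        fix j assume j: "j < ?n"
        have "(j+1) mod ?n < ?n" using n3 by (intro mod_less_divisor) auto
        thus "adj H (?c!j) (?c!((j+1) mod ?n))" using adjcD[OF j] sC j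
          by (auto simp: H_def adj_induced)
      qed
      thus "if ?n = 2 then 2 \<le> mult H (?c ! 0) (?c ! 1)
        else \<forall>i<?n. adj H (?c ! i) (?c ! ((i + 1) mod ?n))" using n3 by simp
    qed
    thus ?thesis by (auto simp: is_tree_def)
  qed
  ultimately have "proper_interval H" by blast
  then obtain l r :: "'a \<Rightarrow> real" where
    lr: "\<forall>u\<in>verts H. l u \<le> r u"
    and ad: "\<forall>u\<in>verts H. \<forall>w\<in>verts H. u \<noteq> w \<longrightarrow> (adj H u w \<longleftrightarrow> {l u..r u} \<inter> {l w..r w} \<noteq> {})"
    and pc: "\<forall>u\<in>verts H. \<forall>w\<in>verts H. \<not> {l u..r u} \<subset> {l w..r w}"
    unfolding proper_interval_def by blast
  have nb: "\<exists>a b. a \<noteq> b \<and> a \<noteq> v \<and> b \<noteq> v \<and> a \<in> set (F!i) \<and> b \<in> set (F!i)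
      \<and> adj H v a \<and> adj H v b \<and> a \<in> V2 \<and> b \<in> V2" if iG: "i \<in> Good" for i
  proof -
    have il: "i < length F" and cX: "set (F!i) \<inter> X = {}" using that by (auto simp: Good_def)
    obtain a b where ab: "a \<noteq> b" "a \<noteq> v" "b \<noteq> v" "a \<in> set (F!i)" "b \<in> set (F!i)"
      "adj K v a" "adj K v b"
      using cycle_nbrs[OF symK cycK(1)[OF il] len3[OF iG] cycK(2)[OF il]] by blast
    have H: "adj H v x" "x \<in> V2" if "adj K v x" "x \<in> set (F!i)" "x \<noteq> v" for x
    proof -
      have "adj D v x" using that adjK adjD vX cX by blast
      thus "adj H v x" using clC vC by (auto simp: H_def adj_induced)
      show "x \<in> V2" using that by (auto simp: K_def adj_induced)
    qed
    show ?thesis using ab H by blast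
  qed
  obtain a1 b1 where ab1: "a1 \<noteq> b1" "a1 \<noteq> v" "b1 \<noteq> v" "a1 \<in> set (F!i1)" "b1 \<in> set (F!i1)"
      "adj H v a1" "adj H v b1" "a1 \<in> V2" "b1 \<in> V2" using nb[OF G123(1)] by blast
  obtain a2 b2 where ab2: "a2 \<noteq> b2" "a2 \<noteq> v" "b2 \<noteq> v" "a2 \<in> set (F!i2)" "b2 \<in> set (F!i2)"
      "adj H v a2" "adj H v b2" "a2 \<in> V2" "b2 \<in> V2" using nb[OF G123(2)] by blast
  obtain a3 b3 where ab3: "a3 \<noteq> b3" "a3 \<noteq> v" "b3 \<noteq> v" "a3 \<in> set (F!i3)" "b3 \<in> set (F!i3)"
      "adj H v a3" "adj H v b3" "a3 \<in> V2" "b3 \<in> V2" using nb[OF G123(3)] by blast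
  have d12: "set (F!i1) \<inter> set (F!i2) = {v}" "set (F!i2) \<inter> set (F!i3) = {v}" "set (F!i1) \<inter> set (F!i3) = {v}"
    using disj G123 I by (auto simp: Good_def)
  have dist: "distinct [a1,b1,a2,b2,a3]"
    using ab1 ab2 ab3 d12 by auto
  let ?N = "{a1,b1,a2,b2,a3}"
  have NH: "x \<in> ?N \<Longrightarrow> adj H v x \<and> x \<noteq> v \<and> x \<in> V2" for x using ab1 ab2 ab3 by auto
  have adjHG: "adj H x y \<Longrightarrow> adj G x y" for x y by (simp add: H_def adj_induced adjD)
  show False
  proof (rule five[OF dist, where P = "\<lambda>u. l u \<le> l v" and E = "adj G"])
    fix x y assume "x \<in> ?N" "y \<in> ?N" "x \<noteq> y" "(l x \<le> l v) = (l y \<le> l v)"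
    thus "adj G x y" using interval_nbrs[OF lr ad pc, of v x y] NH adjHG by blast
  next
    fix x y z assume "x \<in> ?N" "y \<in> ?N" "z \<in> ?N" "distinct [x,y,z]" "adj G x y" "adj G y z" "adj G x z"
    thus False using no_triangle[OF mg V2] NH by blast
  qed
qed


lemma del_del: "v \<in> X \<Longrightarrow> del_verts (del_verts G {v}) (X - {v}) = del_verts G X"
  by (auto simp: del_verts_def induced_def fun_eq_iff)

theorem lemma23:
  fixes G :: "'a mgraph" and k :: int and S V2 :: "'a set" and v :: 'a and F :: "'a list list"
  assumes "multigraph G"
    and "S \<subseteq> verts G"
    and "propint_tree (del_verts G S)"
    and "V2 = \<Union>{C. component (del_verts G S) C \<and> is_tree (induced (del_verts G S) C)}"
    and "v \<in> S"
    and "flower (induced G ({v} \<union> V2)) v F"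
    and "int (length F) = 4 * k + 3"
  shows "(\<forall>X. solution G k X \<longrightarrow> v \<in> X) \<and>
         (yes_instance G k \<longleftrightarrow> yes_instance (del_verts G {v}) (k - 1))"
proof -
  have P1: "\<forall>X. solution G k X \<longrightarrow> v \<in> X"
    using must_contain[OF assms(1,2,4,5,6,7)] by blast
  have finG: "finite (verts G)" using assms(1) by (simp add: multigraph_def)
  have vG: "v \<in> verts G" using assms(2,5) by auto
  have "yes_instance G k \<longleftrightarrow> yes_instance (del_verts G {v}) (k - 1)"
  proof
    assume "yes_instance G k"
    then obtain X where X: "solution G k X" by (auto simp: yes_instance_def)
    hence vX: "v \<in> X" using P1 by blast
    have XV: "X \<subseteq> verts G" using X by (simp add: solution_def)
    have fX: "finite X" using XV finG finite_subset by blast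
    have "card (X - {v}) = card X - 1" using vX fX by simp
    moreover have "card X \<ge> 1" using vX fX by (metis One_nat_def Suc_leI card_gt_0_iff empty_iff)
    ultimately have "int (card (X - {v})) \<le> k - 1" using X by (simp add: solution_def)
    hence "solution (del_verts G {v}) (k - 1) (X - {v})"
      using X XV del_del[OF vX] by (auto simp: solution_def del_verts_def)
    thus "yes_instance (del_verts G {v}) (k - 1)" by (auto simp: yes_instance_def)
  next
    assume "yes_instance (del_verts G {v}) (k - 1)"
    then obtain Y where Y: "solution (del_verts G {v}) (k - 1) Y" by (auto simp: yes_instance_def)
    have YV: "Y \<subseteq> verts G - {v}" using Y by (auto simp: solution_def del_verts_def)
    have fY: "finite Y" using YV finG finite_subset by blast
    have vY: "v \<notin> Y" using YV by auto
    have "card (insert v Y) = card Y + 1" using fY vY by simp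
    hence "int (card (insert v Y)) \<le> k" using Y by (simp add: solution_def)
    moreover have "insert v Y - {v} = Y" using vY by auto
    ultimately have "solution G k (insert v Y)"
      using Y YV vG del_del[of v "insert v Y" G] by (auto simp: solution_def)
    thus "yes_instance G k" by (auto simp: yes_instance_def)
  qed
  with P1 show ?thesis by blast
qed

end
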